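(* Let $f$ be a probability density on $\mathbb{R}_{\geq 0}$ and let $X,Y$ be independent random variables, each with distribution $f(x)\,dx$. Let $\operatorname{med}(X)$ denote a median of this distribution, i.e. a number $m> 0$ with $\mathbb{P}(X\le m)=1/2$. Then $$\sup_{0\le z\le \operatorname{med}(X)} \mathbb{P}\left( X \leq z \text{ and } X+Y \geq 2z\right) \;\geq\; \frac{1}{24 + 8\log_2\!\big( \operatorname{med}(X)\, \|f\|_{L^{\infty}}\big)},$$ and in particular the same lower bound holds for $\sup_{z>0} \mathbb{P}\left( X \leq z \text{ and } X+Y \geq 2z\right)$. Moreover, this estimate is sharp up to constants: there exist a constant $C>0$ and a sequence of probability densities $f_n$ on $\mathbb{R}_{\geq 0}$, with corresponding i.i.d. pairs $X_n,Y_n$, such that $\operatorname{med}(X_n)\|f_n\|_{L^\infty}\to\infty$ and $$\sup_{z>0} \mathbb{P}\left( X_n \leq z \text{ and } X_n+Y_n \geq 2z\right) \le \frac{C}{\log_2\!\big(\operatorname{med}(X_n)\|f_n\|_{L^\infty}\big)}\quad\text{for all } n.$$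
   Context: $\|f\|_{L^\infty}$ denotes the essential supremum of the density $f$; one always has $\operatorname{med}(X)\|f\|_{L^\infty}\ge 1/2$, so the right-hand side of the lower bound is well defined and positive (it is interpreted as $0$ if $\|f\|_{L^\infty}=\infty$). *)

theory Defs
  imports "HOL-Probability.Probability"
begin

definition prob_density_nonneg :: "(real \<Rightarrow> real) \<Rightarrow> bool" where
  "prob_density_nonneg f \<longleftrightarrow> f \<in> borel_measurable lborel \<and> (\<forall>x. 0 \<le> f x)
     \<and> (\<forall>x<0. f x = 0) \<and> (\<integral>\<^sup>+ x. ennreal (f x) \<partial>lborel) = 1"

definition Linf_norm :: "(real \<Rightarrow> real) \<Rightarrow> ereal" where
  "Linf_norm f = esssup lborel (\<lambda>x. ereal (f x))"

definition is_median :: "(real \<Rightarrow> real) \<Rightarrow> real \<Rightarrow> bool" where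
  "is_median f m \<longleftrightarrow> 0 < m \<and> measure (density lborel (\<lambda>x. ennreal (f x))) {..m} = 1/2"

definition iid_with_density :: "'a measure \<Rightarrow> ('a \<Rightarrow> real) \<Rightarrow> ('a \<Rightarrow> real) \<Rightarrow> (real \<Rightarrow> real) \<Rightarrow> bool" where
  "iid_with_density M X Y f \<longleftrightarrow> prob_space M
     \<and> distributed M lborel X (\<lambda>x. ennreal (f x))
     \<and> distributed M lborel Y (\<lambda>x. ennreal (f x))
     \<and> prob_space.indep_var M borel X borel Y"

definition PXY :: "'a measure \<Rightarrow> ('a \<Rightarrow> real) \<Rightarrow> ('a \<Rightarrow> real) \<Rightarrow> real \<Rightarrow> real" where
  "PXY M X Y z = measure M {\<omega> \<in> space M. X \<omega> \<le> z \<and> 2 * z \<le> X \<omega> + Y \<omega>}"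

definition lower_bound :: "real \<Rightarrow> (real \<Rightarrow> real) \<Rightarrow> real" where
  "lower_bound m f = (case Linf_norm f of ereal s \<Rightarrow> 1 / (24 + 8 * log 2 (m * s)) | _ \<Rightarrow> 0)"

end

theory Submission imports Defs begin

lemma pd_D_prob:
  assumes "prob_density_nonneg f"
  shows "prob_space (density lborel (\<lambda>x. ennreal (f x)))"
proof
  have m: "f \<in> borel_measurable lborel" using assms unfolding prob_density_nonneg_def by blast
  show "emeasure (density lborel (\<lambda>x. ennreal (f x))) (space (density lborel (\<lambda>x. ennreal (f x)))) = 1"
    using assms unfolding prob_density_nonneg_def
    by (simp add: emeasure_density m)
qed

lemma pd_AE:
  assumes "prob_density_nonneg f" "Linf_norm f = ereal s"
  shows "AE x in lborel. f x \<le> s" and "0 \<le> s"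
proof -
  have "AE x in lborel. ereal (f x) \<le> esssup lborel (\<lambda>x. ereal (f x))" by (rule esssup_AE)
  then show ae: "AE x in lborel. f x \<le> s" using assms(2) unfolding Linf_norm_def by simp
  show "0 \<le> s"
  proof (rule ccontr)
    assume "\<not> 0 \<le> s"
    then have "\<And>x. \<not> f x \<le> s" using assms(1) unfolding prob_density_nonneg_def
      by (meson le_less_trans linorder_not_le)
    from ae obtain N where N: "{x \<in> space lborel. \<not> f x \<le> s} \<subseteq> N" "N \<in> sets lborel" "emeasure lborel N = 0"
      by (auto elim!: AE_E)
    then have "UNIV \<subseteq> N" using \<open>\<And>x. \<not> f x \<le> s\<close> by auto
    then have "N = UNIV" by auto
    then show False using N by simp
  qed
qed

lemma pd_mass_le:
  assumes pd: "prob_density_nonneg f" and L: "Linf_norm f = ereal s" and ab: "a \<le> b"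
  shows "measure (density lborel (\<lambda>x. ennreal (f x))) {a<..b} \<le> s * (b - a)"
proof -
  have m: "f \<in> borel_measurable lborel" using pd unfolding prob_density_nonneg_def by blast
  note ae = pd_AE[OF pd L]
  have "emeasure (density lborel (\<lambda>x. ennreal (f x))) {a<..b} = (\<integral>\<^sup>+ x. ennreal (f x) * indicator {a<..b} x \<partial>lborel)"
    by (rule emeasure_density) (use m in auto)
  also have "\<dots> \<le> (\<integral>\<^sup>+ x. ennreal s * indicator {a<..b} x \<partial>lborel)"
    by (intro nn_integral_mono_AE, use ae(1) in eventually_elim) (auto simp: indicator_def ennreal_leI)
  also have "\<dots> = ennreal s * emeasure lborel {a<..b}"
    using nn_integral_cmult_indicator[of "{a<..b}" lborel "ennreal s"] by (simp add: mult.commute)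
  also have "\<dots> = ennreal (s * (b - a))" using ab ae(2) by (simp add: ennreal_mult)
  finally show ?thesis unfolding measure_def
    by (intro enn2real_leI) (use ab ae(2) in auto)
qed

lemma pd_mass_0:
  assumes pd: "prob_density_nonneg f"
  shows "measure (density lborel (\<lambda>x. ennreal (f x))) {..0} = 0"
proof -
  have m: "f \<in> borel_measurable lborel" using pd unfolding prob_density_nonneg_def by blast
  have "emeasure (density lborel (\<lambda>x. ennreal (f x))) {..0} = (\<integral>\<^sup>+ x. ennreal (f x) * indicator {..0} x \<partial>lborel)"
    by (rule emeasure_density) (use m in auto)
  also have "\<dots> = (\<integral>\<^sup>+ x. 0 \<partial>(lborel::real measure))"
  proof (intro nn_integral_cong_AE)
    show "AE x in lborel. ennreal (f x) * indicator {..0} x = 0"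
      using AE_lborel_singleton[of 0]
    proof eventually_elim
      case (elim x)
      then show ?case using pd by (auto simp: indicator_def prob_density_nonneg_def)
    qed
  qed
  finally show ?thesis unfolding measure_def by simp
qed

lemma distr_meas:
  assumes "distributed M lborel X (\<lambda>x. ennreal (f x))" "A \<in> sets borel"
  shows "measure M {\<omega>\<in>space M. X \<omega> \<in> A} = measure (density lborel (\<lambda>x. ennreal (f x))) A"
proof -
  have X: "X \<in> measurable M lborel" and d: "distr M lborel X = density lborel (\<lambda>x. ennreal (f x))"
    using assms(1) unfolding distributed_def by auto
  have "measure M {\<omega>\<in>space M. X \<omega> \<in> A} = measure M (X -` A \<inter> space M)"
    by (rule arg_cong[where f="measure M"]) auto
  also have "\<dots> = measure (distr M lborel X) A" using X assms(2) by (simp add: measure_distr)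
  finally show ?thesis using d by simp
qed

lemma key1:
  assumes pd: "prob_density_nonneg f" and iid: "iid_with_density M X Y f" and med: "is_median f m"
  shows "\<exists>z. 0 < z \<and> z \<le> m \<and> lower_bound m f \<le> PXY M X Y z"
proof (cases "Linf_norm f")
  case (real s)
  interpret prob_space M using iid unfolding iid_with_density_def by blast
  define D where "D = density lborel (\<lambda>x. ennreal (f x))"
  interpret D: prob_space D unfolding D_def by (rule pd_D_prob[OF pd])
  have dX: "distributed M lborel X (\<lambda>x. ennreal (f x))" and dY: "distributed M lborel Y (\<lambda>x. ennreal (f x))"
    and ind: "indep_var borel X borel Y" using iid unfolding iid_with_density_def by auto
  define G where "G t = measure D {..t}" for t
  have sD: "sets D = sets borel" unfolding D_def by simp
  have Gd: "measure D {a<..b} = G b - G a" if "a \<le> b" for a b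
  proof -
    have "{a<..b} = {..b} - {..a}" by auto
    then show ?thesis unfolding G_def using that
      by (simp add: D.finite_measure_Diff sD)
  qed
  have G0: "G 0 = 0" unfolding G_def D_def by (rule pd_mass_0[OF pd])
  have Gm: "G m = 1/2" and m0: "0 < m" using med unfolding is_median_def G_def D_def by auto
  have mass: "measure D {a<..b} \<le> s * (b - a)" if "a \<le> b" for a b
    unfolding D_def by (rule pd_mass_le[OF pd real that])
  have s0: "0 \<le> s" by (rule pd_AE(2)[OF pd real])
  have ms: "1/2 \<le> m * s" using mass[of 0 m] Gd[of 0 m] G0 Gm m0 by (simp add: mult.commute)
  define L where "L = log 2 (m * s)"
  have pL: "2 powr L = m * s" unfolding L_def using ms by simp
  have Lge: "-1 \<le> L"
  proof -
    have "2 powr (-1::real) \<le> 2 powr L" using pL ms by (simp add: powr_minus)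
    then show ?thesis using powr_le_cancel_iff[of "2::real" "-1" L] by linarith
  qed
  define K where "K = nat \<lceil>L + 2\<rceil>"
  have K1: "L + 2 \<le> real K" "real K \<le> L + 3" "1 \<le> K" unfolding K_def using Lge
    by (auto simp: nat_le_iff) linarith+
  have "2 powr (L + 2) \<le> 2 powr real K" using K1 by simp
  then have K2: "4 * (m * s) \<le> 2 ^ K" using pL by (simp add: powr_add powr_realpow)
  define z where "z j = m - m / 2 ^ j" for j :: nat
  have z0: "z 0 = 0" unfolding z_def by simp
  have zle: "z j \<le> z (Suc j)" for j unfolding z_def using m0 by (simp add: field_simps)
  have zm: "z j \<le> m" for j unfolding z_def using m0 by simp
  have tel: "(\<Sum>i<K. G (z (Suc i)) - G (z i)) = G (z K) - G (z 0)"
    by (rule sum_lessThan_telescope)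
  have "G m - G (z K) \<le> s * (m - z K)" using mass[of "z K" m] Gd[of "z K" m] zm by simp
  also have "s * (m - z K) = m * s / 2 ^ K" unfolding z_def by simp
  also have "\<dots> \<le> 1/4" using K2 by (simp add: field_simps)
  finally have sum14: "1/4 \<le> (\<Sum>i<K. G (z (Suc i)) - G (z i))" using tel z0 G0 Gm by simp
  obtain i where i: "i < K" "1 / (4 * real K) \<le> G (z (Suc i)) - G (z i)"
  proof (rule ccontr)
    assume "\<not> thesis"
    then have lt: "\<And>i. i < K \<Longrightarrow> G (z (Suc i)) - G (z i) < 1 / (4 * real K)"
      using that by force
    have "(\<Sum>i<K. G (z (Suc i)) - G (z i)) < (\<Sum>i<K. 1 / (4 * real K))"
      using K1 lt by (intro sum_strict_mono) (auto simp: lessThan_empty_iff)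
    also have "\<dots> = 1/4" using K1 by simp
    finally show False using sum14 by simp
  qed
  define w where "w = z (Suc i)"
  define d where "d = m / 2 ^ Suc i"
  have wd: "z i = w - d" "w + d = m" unfolding w_def d_def z_def by (simp_all add: field_simps)
  have d0: "0 < d" unfolding d_def using m0 by simp
  have dle: "d \<le> m / 2" unfolding d_def using m0 by (simp add: field_simps)
  have w0: "0 < w" "w \<le> m" using wd d0 dle m0 by auto
  have PX: "measure M {\<omega>\<in>space M. X \<omega> \<in> {w - d<..w}} = G w - G (w - d)"
    using distr_meas[OF dX, of "{w - d<..w}"] Gd[of "w-d" w] d0 unfolding D_def by simp
  have "measure D {m<..} = 1 - G m"
  proof -
    have "{m<..} = space D - {..m}" by (auto simp: D_def)
    then show ?thesis unfolding G_def by (simp add: D.prob_compl sD)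
  qed
  moreover have "measure D {m<..} \<le> measure D {m..}" by (rule D.finite_measure_mono) (auto simp: sD)
  ultimately have "1/2 \<le> measure D {m..}" using Gm by linarith
  then have PY: "1/2 \<le> measure M {\<omega>\<in>space M. Y \<omega> \<in> {m..}}"
    using distr_meas[OF dY, of "{m..}"] unfolding D_def by simp
  have rv: "random_variable borel X" "random_variable borel Y"
    using dX dY unfolding distributed_def by auto
  have "measure M {\<omega>\<in>space M. X \<omega> \<in> {w - d<..w} \<and> Y \<omega> \<in> {m..}}
      = measure M {\<omega>\<in>space M. X \<omega> \<in> {w - d<..w}} * measure M {\<omega>\<in>space M. Y \<omega> \<in> {m..}}"
    by (rule prob_indep_random_variable[OF ind]) auto
  also have "\<dots> \<ge> (1 / (4 * real K)) * (1/2)"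
  proof -
    have a: "1/(4*real K) \<le> measure M {\<omega>\<in>space M. X \<omega> \<in> {w - d<..w}}" using PX i wd w_def by simp
    have b: "1/2 \<le> measure M {\<omega>\<in>space M. Y \<omega> \<in> {m..}}" using PY by simp
    show ?thesis by (rule mult_mono[OF a b measure_nonneg]) simp
  qed
  finally have P1: "1 / (8 * real K) \<le> measure M {\<omega>\<in>space M. X \<omega> \<in> {w - d<..w} \<and> Y \<omega> \<in> {m..}}"
    by simp
  also have "\<dots> \<le> PXY M X Y w" unfolding PXY_def
  proof (rule finite_measure_mono)
    show "{\<omega> \<in> space M. X \<omega> \<in> {w - d<..w} \<and> Y \<omega> \<in> {m..}} \<subseteq> {\<omega> \<in> space M. X \<omega> \<le> w \<and> 2 * w \<le> X \<omega> + Y \<omega>}"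
      using wd by auto
    show "{\<omega> \<in> space M. X \<omega> \<le> w \<and> 2 * w \<le> X \<omega> + Y \<omega>} \<in> events"
      using rv by measurable
  qed
  finally have P2: "1 / (8 * real K) \<le> PXY M X Y w" .
  have "lower_bound m f = 1 / (24 + 8 * L)" unfolding lower_bound_def L_def using real by simp
  also have "\<dots> \<le> 1 / (8 * real K)" using K1 by (intro divide_left_mono) auto
  finally show ?thesis using P2 w0 by auto
next
  case PInf
  interpret prob_space M using iid unfolding iid_with_density_def by blast
  show ?thesis using PInf med unfolding lower_bound_def is_median_def PXY_def
    by (intro exI[of _ m]) auto
next
  case MInf
  interpret prob_space M using iid unfolding iid_with_density_def by blast
  show ?thesis using MInf med unfolding lower_bound_def is_median_def PXY_def
    by (intro exI[of _ m]) auto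
qed


lemma int_h:
  fixes a b c :: real
  assumes ab: "a \<le> b" and b1: "b < 1" and c: "0 < c"
  shows "(\<integral>\<^sup>+x. ennreal (1/((1-x)*c)) * indicator {a..b} x \<partial>lborel) = ennreal ((ln(1-a) - ln(1-b))/c)"
proof -
  have d: "((\<lambda>x. - ln (1-x) / c) has_vector_derivative (1/((1-x)*c))) (at x within {a..b})"
    if "x \<in> {a..b}" for x
  proof -
    have x1: "x < 1" using that b1 by auto
    have "((\<lambda>x. - ln (1-x) / c) has_real_derivative (1/((1-x)*c))) (at x)"
      using x1 c by (auto intro!: derivative_eq_intros simp: field_simps)
    then show ?thesis by (simp add: has_real_derivative_iff_has_vector_derivative[symmetric] has_field_derivative_at_within)
  qed
  have "((\<lambda>x. 1/((1-x)*c)) has_integral ((- ln (1-b) / c) - (- ln (1-a) / c))) {a..b}"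
    by (rule fundamental_theorem_of_calculus[OF ab d])
  then have "((\<lambda>x. 1/((1-x)*c)) has_integral ((ln(1-a) - ln(1-b))/c)) {a..b}"
    by (simp add: diff_divide_distrib)
  moreover have "\<And>x. x \<in> {a..b} \<Longrightarrow> 0 \<le> 1/((1-x)*c)" using b1 c by auto
  ultimately show ?thesis by (intro nn_integral_has_integral_lebesgue')
qed

definition cc :: "nat \<Rightarrow> real" where "cc j = 2 * real j * ln 2"
definition ff :: "nat \<Rightarrow> real \<Rightarrow> real" where
  "ff j x = (if 0 \<le> x \<and> x \<le> 1 - 1/4^j then 1/((1-x)*cc j) else 0)"

lemma cc_pos: "1 \<le> j \<Longrightarrow> 0 < cc j" unfolding cc_def by simp

lemma ln4: "ln ((4::real)^j) = cc j"
proof -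
  have "ln ((4::real)^j) = real j * ln 4" by (simp add: ln_realpow)
  also have "ln (4::real) = 2 * ln 2" using ln_realpow[of 2 2] by simp
  finally show ?thesis unfolding cc_def by simp
qed

lemma ff_meas: "ff j \<in> borel_measurable lborel"
  unfolding ff_def by measurable

lemma ff_nonneg: assumes "1 \<le> j" shows "0 \<le> ff j x"
proof -
  have q: "0 < (1::real)/4^j" by simp
  show ?thesis
  proof (cases "0 \<le> x \<and> x \<le> 1 - 1/4^j")
    case True
    then have "0 < 1 - x" using q by linarith
    then show ?thesis using cc_pos[OF assms] True by (simp add: ff_def)
  next
    case False
    show ?thesis unfolding ff_def by (subst if_not_P[OF False]) simp
  qed
qed

lemma ff_int:
  assumes j: "1 \<le> j" and A: "A \<in> sets borel"
  shows "emeasure (density lborel (\<lambda>x. ennreal (ff j x))) A = (\<integral>\<^sup>+x. ennreal (ff j x) * indicator A x \<partial>lborel)"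
  by (rule emeasure_density) (use ff_meas[of j] A in auto)

lemma ff_pd: assumes j: "1 \<le> j" shows "prob_density_nonneg (ff j)"
proof -
  have c: "0 < cc j" using cc_pos[OF j] .
  have q: "(1::real)/4^j \<le> 1" "0 < (1::real)/4^j" by auto
  have "(\<integral>\<^sup>+x. ennreal (ff j x) \<partial>lborel) = (\<integral>\<^sup>+x. ennreal (1/((1-x)*cc j)) * indicator {0..1 - 1/4^j} x \<partial>lborel)"
    by (intro nn_integral_cong) (auto simp: ff_def indicator_def)
  also have "\<dots> = ennreal ((ln (1-0) - ln (1 - (1 - 1/4^j))) / cc j)"
    by (rule int_h) (use q c in auto)
  also have "\<dots> = 1" using c ln4[of j] by (simp add: ln_div)
  finally show ?thesis unfolding prob_density_nonneg_def using ff_meas[of j] ff_nonneg[OF j]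
    by (auto simp: ff_def)
qed

lemma ff_median: assumes j: "1 \<le> j" shows "is_median (ff j) (1 - 1/2^j)"
proof -
  have c: "0 < cc j" using cc_pos[OF j] .
  have le: "(1::real)/4^j \<le> 1/2^j" by (simp add: frac_le power_mono)
  have h: "(1::real)/2^j < 1" using j by simp
  have "emeasure (density lborel (\<lambda>x. ennreal (ff j x))) {..1 - 1/2^j} = (\<integral>\<^sup>+x. ennreal (ff j x) * indicator {..1 - 1/2^j} x \<partial>lborel)"
    by (rule ff_int) (use j in auto)
  also have "\<dots> = (\<integral>\<^sup>+x. ennreal (1/((1-x)*cc j)) * indicator {0..1 - 1/2^j} x \<partial>lborel)"
    using le by (intro nn_integral_cong) (auto simp: ff_def indicator_def)
  also have "\<dots> = ennreal ((ln (1-0) - ln (1 - (1 - 1/2^j))) / cc j)"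
    by (rule int_h) (use h c in auto)
  also have "\<dots> = ennreal (1/2)"
  proof -
    have "ln ((2::real)^j) = real j * ln 2" by (simp add: ln_realpow)
    then show ?thesis using c j unfolding cc_def by (simp add: ln_div)
  qed
  finally have e: "emeasure (density lborel (\<lambda>x. ennreal (ff j x))) {..1 - 1/2^j} = ennreal (1/2)" .
  have "measure (density lborel (\<lambda>x. ennreal (ff j x))) {..1 - 1/2^j} = 1/2"
    by (unfold measure_def e, rule enn2real_ennreal) simp
  then show ?thesis unfolding is_median_def using h by simp
qed

lemma pd_not_MInf:
  assumes "prob_density_nonneg f" shows "Linf_norm f \<noteq> -\<infinity>"
proof
  assume L: "Linf_norm f = -\<infinity>"
  have "AE x in lborel. ereal (f x) \<le> esssup lborel (\<lambda>x. ereal (f x))" by (rule esssup_AE)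
  then have ae: "AE x in (lborel::real measure). False" using L unfolding Linf_norm_def by simp
  from ae obtain N :: "real set" where N: "{x \<in> space lborel. \<not> False} \<subseteq> N" "N \<in> sets lborel" "emeasure lborel N = 0"
    by (auto elim!: AE_E)
  then have "N = UNIV" by auto
  then show False using N by simp
qed

lemma pd_emass_le_Icc:
  assumes pd: "prob_density_nonneg f" and L: "Linf_norm f = ereal s" and ab: "a \<le> b"
  shows "emeasure (density lborel (\<lambda>x. ennreal (f x))) {a..b} \<le> ennreal (s * (b - a))"
proof -
  have m: "f \<in> borel_measurable lborel" using pd unfolding prob_density_nonneg_def by blast
  note ae = pd_AE[OF pd L]
  have "emeasure (density lborel (\<lambda>x. ennreal (f x))) {a..b} = (\<integral>\<^sup>+ x. ennreal (f x) * indicator {a..b} x \<partial>lborel)"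
    by (rule emeasure_density) (use m in auto)
  also have "\<dots> \<le> (\<integral>\<^sup>+ x. ennreal s * indicator {a..b} x \<partial>lborel)"
    by (intro nn_integral_mono_AE, use ae(1) in eventually_elim) (auto simp: indicator_def ennreal_leI)
  also have "\<dots> = ennreal s * emeasure lborel {a..b}"
    using nn_integral_cmult_indicator[of "{a..b}" lborel "ennreal s"] by (simp add: mult.commute)
  also have "\<dots> = ennreal (s * (b - a))" using ab ae(2) by (simp add: ennreal_mult)
  finally show ?thesis .
qed

lemma ff_Linf:
  assumes j: "1 \<le> j"
  shows "\<exists>s. Linf_norm (ff j) = ereal s \<and> 4^j * ln 2 / cc j \<le> s \<and> s \<le> 4^j / cc j"
proof -
  have c: "0 < cc j" using cc_pos[OF j] .
  have q: "0 < (1::real)/4^j" by simp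
  have ub: "ff j x \<le> 4^j / cc j" for x
  proof (cases "0 \<le> x \<and> x \<le> 1 - 1/4^j")
    case True
    then have x: "1/4^j \<le> 1 - x" by linarith
    have x1: "0 < 1 - x" using x q by linarith
    have "ff j x = 1 / ((1-x) * cc j)" using True by (simp add: ff_def)
    also have "\<dots> \<le> 1 / ((1/4^j) * cc j)"
      using x c q x1 by (intro divide_left_mono mult_right_mono mult_pos_pos) auto
    also have "\<dots> = 4^j / cc j" by simp
    finally show ?thesis .
  next
    case False
    have "ff j x = 0" unfolding ff_def by (subst if_not_P[OF False]) simp
    then show ?thesis using c by simp
  qed
  have "Linf_norm (ff j) \<le> ereal (4^j / cc j)"
    unfolding Linf_norm_def using ub ff_meas[of j] by (intro esssup_I) auto
  moreover have "Linf_norm (ff j) \<noteq> -\<infinity>" by (rule pd_not_MInf[OF ff_pd[OF j]])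
  ultimately obtain s where s: "Linf_norm (ff j) = ereal s" "s \<le> 4^j / cc j"
    by (cases "Linf_norm (ff j)") auto
  have s0: "0 \<le> s" by (rule pd_AE(2)[OF ff_pd[OF j] s(1)])
  have four: "(2::real)/4^j \<le> 1"
  proof -
    have "(4::real)^1 \<le> 4^j" using j by (intro power_increasing) auto
    then show ?thesis by simp
  qed
  have "emeasure (density lborel (\<lambda>x. ennreal (ff j x))) {1 - 2/4^j..1 - 1/4^j}
      = (\<integral>\<^sup>+x. ennreal (ff j x) * indicator {1 - 2/4^j..1 - 1/4^j} x \<partial>lborel)"
    by (rule ff_int) (use j in auto)
  also have "\<dots> = (\<integral>\<^sup>+x. ennreal (1/((1-x)*cc j)) * indicator {1 - 2/4^j..1 - 1/4^j} x \<partial>lborel)"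
  proof (intro nn_integral_cong)
    fix x
    have h0: "0 \<le> 1 - (2::real)/4^j" using four by linarith
    show "ennreal (ff j x) * indicator {1 - 2/4^j..1 - 1/4^j} x = ennreal (1/((1-x)*cc j)) * indicator {1 - 2/4^j..1 - 1/4^j} x"
    proof (cases "x \<in> {1 - 2/4^j..1 - 1/4^j}")
      case True
      then have t: "1 - 2/4^j \<le> x" "x \<le> 1 - 1/4^j" by auto
      then have "0 \<le> x" using h0 by linarith
      then show ?thesis using True t by (simp add: ff_def)
    next
      case False
      then show ?thesis by simp
    qed
  qed
  also have "\<dots> = ennreal ((ln (1 - (1 - 2/4^j)) - ln (1 - (1 - 1/4^j))) / cc j)"
    by (rule int_h) (use c in \<open>auto intro!: divide_right_mono\<close>)
  also have "(ln (1 - (1 - 2/4^j)) - ln (1 - (1 - 1/4^j))) / cc j = ln 2 / cc j"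
    by (simp add: ln_div)
  finally have e: "emeasure (density lborel (\<lambda>x. ennreal (ff j x))) {1 - 2/4^j..1 - 1/4^j} = ennreal (ln 2 / cc j)" .
  have "ennreal (ln 2 / cc j) \<le> ennreal (s * ((1 - 1/4^j) - (1 - 2/4^j)))"
  proof -
    have "(1::real)/4^j \<le> 2/4^j" by (intro divide_right_mono) auto
    then have "1 - 2/4^j \<le> 1 - (1::real)/4^j" by linarith
    then show ?thesis using pd_emass_le_Icc[OF ff_pd[OF j] s(1), of "1 - 2/4^j" "1 - 1/4^j"] e by simp
  qed
  then have "ln 2 / cc j \<le> s * (1/4^j)"
    using s0 by (subst (asm) ennreal_le_iff) (auto simp: algebra_simps)
  then have "4^j * ln 2 / cc j \<le> s" by (simp add: field_simps)
  then show ?thesis using s by blast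
qed

lemma ff_PXY:
  assumes j: "1 \<le> j" and iid: "iid_with_density M X Y (ff j)"
  shows "PXY M X Y z \<le> 1 / (2 * real j)"
proof -
  interpret prob_space M using iid unfolding iid_with_density_def by blast
  have dX: "distributed M lborel X (\<lambda>x. ennreal (ff j x))" and dY: "distributed M lborel Y (\<lambda>x. ennreal (ff j x))"
    using iid unfolding iid_with_density_def by auto
  have rv: "random_variable borel X" "random_variable borel Y"
    using dX dY unfolding distributed_def by auto
  have c: "0 < cc j" using cc_pos[OF j] .
  define D where "D = density lborel (\<lambda>x. ennreal (ff j x))"
  have e1: "emeasure D {2*z-1<..z} \<le> ennreal (1 / (2 * real j))"
  proof (cases "z < 1")
    case True
    have "emeasure D {2*z-1<..z} = (\<integral>\<^sup>+x. ennreal (ff j x) * indicator {2*z-1<..z} x \<partial>lborel)"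
      unfolding D_def by (rule ff_int) (use j in auto)
    also have "\<dots> \<le> (\<integral>\<^sup>+x. ennreal (1/((1-x)*cc j)) * indicator {2*z-1..z} x \<partial>lborel)"
    proof (intro nn_integral_mono)
      fix x
      show "ennreal (ff j x) * indicator {2*z-1<..z} x \<le> ennreal (1/((1-x)*cc j)) * indicator {2*z-1..z} x"
      proof (cases "x \<in> {2*z-1<..z}")
        case True
        then have x1: "0 < 1 - x" using \<open>z < 1\<close> by auto
        have "ff j x \<le> 1/((1-x)*cc j)" unfolding ff_def using x1 c by auto
        then show ?thesis using True by (auto simp: indicator_def ennreal_leI)
      next
        case False
        then show ?thesis by simp
      qed
    qed
    also have "\<dots> = ennreal ((ln (1 - (2*z-1)) - ln (1 - z)) / cc j)"
      by (rule int_h) (use True c in auto)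
    also have "(ln (1 - (2*z-1)) - ln (1 - z)) / cc j = 1 / (2 * real j)"
    proof -
      have "1 - (2*z-1) = 2 * (1 - z)" by simp
      moreover have "ln (2 * (1 - z)) = ln 2 + ln (1 - z)" using True by (intro ln_mult_pos) auto
      ultimately have "ln (1 - (2*z-1)) = ln 2 + ln (1 - z)" by simp
      then show ?thesis unfolding cc_def by simp
    qed
    finally show ?thesis .
  next
    case False
    have "emeasure D {2*z-1<..z} = (\<integral>\<^sup>+x. ennreal (ff j x) * indicator {2*z-1<..z} x \<partial>lborel)"
      unfolding D_def by (rule ff_int) (use j in auto)
    also have "\<dots> = (\<integral>\<^sup>+x. 0 \<partial>(lborel::real measure))"
      using False by (intro nn_integral_cong) (auto simp: ff_def indicator_def)
    finally show ?thesis by simp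
  qed
  have e2: "emeasure D {1..} = 0"
  proof -
    have "emeasure D {1..} = (\<integral>\<^sup>+x. ennreal (ff j x) * indicator {1..} x \<partial>lborel)"
      unfolding D_def by (rule ff_int) (use j in auto)
    also have "\<dots> = (\<integral>\<^sup>+x. 0 \<partial>(lborel::real measure))"
    proof (intro nn_integral_cong)
      fix x :: real
      have q: "0 < (1::real)/4^j" by simp
      show "ennreal (ff j x) * indicator {1..} x = 0"
      proof (cases "1 \<le> x")
        case True
        then have nc: "\<not> (0 \<le> x \<and> x \<le> 1 - 1/4^j)" using q by linarith
        have "ff j x = 0" unfolding ff_def by (subst if_not_P[OF nc]) simp
        then show ?thesis by simp
      next
        case False
        then show ?thesis by simp
      qed
    qed
    finally show ?thesis by simp
  qed
  have PX: "measure M {\<omega>\<in>space M. X \<omega> \<in> {2*z-1<..z}} \<le> 1 / (2 * real j)"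
    using distr_meas[OF dX, of "{2*z-1<..z}"] e1 unfolding D_def measure_def
    by (simp add: enn2real_leI)
  have PY: "measure M {\<omega>\<in>space M. Y \<omega> \<in> {1..}} = 0"
    using distr_meas[OF dY, of "{1..}"] e2 unfolding D_def measure_def by simp
  have "PXY M X Y z \<le> measure M ({\<omega>\<in>space M. X \<omega> \<in> {2*z-1<..z}} \<union> {\<omega>\<in>space M. Y \<omega> \<in> {1..}})"
    unfolding PXY_def
  proof (rule finite_measure_mono)
    show "{\<omega> \<in> space M. X \<omega> \<le> z \<and> 2 * z \<le> X \<omega> + Y \<omega>}
        \<subseteq> {\<omega>\<in>space M. X \<omega> \<in> {2*z-1<..z}} \<union> {\<omega>\<in>space M. Y \<omega> \<in> {1..}}" by auto
    show "{\<omega>\<in>space M. X \<omega> \<in> {2*z-1<..z}} \<union> {\<omega>\<in>space M. Y \<omega> \<in> {1..}} \<in> events"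
      using rv by measurable
  qed
  also have "\<dots> \<le> measure M {\<omega>\<in>space M. X \<omega> \<in> {2*z-1<..z}} + measure M {\<omega>\<in>space M. Y \<omega> \<in> {1..}}"
  proof -
    have s1: "{\<omega>\<in>space M. X \<omega> \<in> {2*z-1<..z}} \<in> events" using rv by measurable
    have s2: "{\<omega>\<in>space M. Y \<omega> \<in> {1..}} \<in> events" using rv by measurable
    show ?thesis by (rule measure_Un_le[OF s1 s2])
  qed
  finally show ?thesis using PX PY by simp
qed

lemma pow4: "1 \<le> j \<Longrightarrow> 4 * real j ^ 2 \<le> (4::real) ^ j"
proof (induction j rule: nat_induct_at_least)
  case base then show ?case by simp
next
  case (Suc n)
  have n1: "1 \<le> real n" using Suc(1) by simp
  have B: "12 * real n * 1 \<le> 12 * real n * real n" using n1 by (intro mult_left_mono) auto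
  have A: "4 * real (Suc n) ^ 2 = 4 * (real n * real n) + 8 * real n + 4"
    by (simp add: power2_eq_square algebra_simps)
  have C: "4 * (4 * real n ^ 2) = 16 * (real n * real n)" by (simp add: power2_eq_square)
  have "4 * real (Suc n) ^ 2 \<le> 4 * (4 * real n ^ 2)"
    unfolding A C using B n1 by linarith
  also have "\<dots> \<le> 4 * 4 ^ n" using Suc(2) by simp
  finally show ?case by simp
qed

lemma ff_facts:
  assumes j: "2 \<le> j"
  shows "real j \<le> (1 - 1/2^j) * real_of_ereal (Linf_norm (ff j))"
    and "0 < log 2 ((1 - 1/2^j) * real_of_ereal (Linf_norm (ff j)))"
    and "log 2 ((1 - 1/2^j) * real_of_ereal (Linf_norm (ff j))) \<le> 2 * real j"
    and "Linf_norm (ff j) \<noteq> \<infinity>"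
proof -
  have j1: "1 \<le> j" using j by simp
  obtain s where s: "Linf_norm (ff j) = ereal s" "4^j * ln 2 / cc j \<le> s" "s \<le> 4^j / cc j"
    using ff_Linf[OF j1] by blast
  show "Linf_norm (ff j) \<noteq> \<infinity>" using s by simp
  have c: "0 < cc j" using cc_pos[OF j1] .
  have l2: "2/3 \<le> ln (2::real)" by (rule ln2_ge_two_thirds)
  have m1: "1/2 \<le> 1 - (1::real)/2^j" "1 - (1::real)/2^j \<le> 1"
  proof -
    have "(2::real)^1 \<le> 2^j" using j1 by (intro power_increasing) auto
    then show "1/2 \<le> 1 - (1::real)/2^j" by (simp add: field_simps)
  qed simp
  have sl: "4^j / (2 * real j) \<le> s" using s(2) l2 unfolding cc_def by (simp add: field_simps)
  have "real j \<le> 4^j / (4 * real j)" using pow4[OF j1] j1 by (simp add: field_simps power2_eq_square)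
  also have "\<dots> = (1/2) * (4^j / (2 * real j))" by simp
  also have "\<dots> \<le> (1 - 1/2^j) * s" using m1 sl by (intro mult_mono) auto
  finally have lo: "real j \<le> (1 - 1/2^j) * s" .
  then show "real j \<le> (1 - 1/2^j) * real_of_ereal (Linf_norm (ff j))" using s by simp
  have pos: "1 < (1 - 1/2^j) * s" using lo j by linarith
  then show "0 < log 2 ((1 - 1/2^j) * real_of_ereal (Linf_norm (ff j)))" using s by simp
  have ccge: "1 \<le> cc j"
  proof -
    have "1 \<le> 2 * 2 * (2/3::real)" by simp
    also have "\<dots> \<le> 2 * real j * ln 2" using j l2 by (intro mult_mono) auto
    finally show ?thesis unfolding cc_def .
  qed
  have s0: "0 \<le> s" by (rule pd_AE(2)[OF ff_pd[OF j1] s(1)])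
  have "(1 - 1/2^j) * s \<le> s" using m1 s0 by (simp add: mult_left_le_one_le)
  also have "s \<le> 4^j / cc j" by (rule s(3))
  also have "\<dots> \<le> 4^j" using ccge by (simp add: divide_le_eq) 
  also have "(4::real)^j = 2 powr (2 * real j)"
  proof -
    have "(4::real)^j = 2^(2*j)" by (simp add: power_mult)
    also have "\<dots> = 2 powr (real (2*j))" by (rule powr_realpow[symmetric]) simp
    finally show ?thesis by simp
  qed
  finally have "(1 - 1/2^j) * s \<le> 2 powr (2 * real j)" .
  then have "log 2 ((1 - 1/2^j) * s) \<le> 2 * real j" using pos by (subst log_le_iff) auto
  then show "log 2 ((1 - 1/2^j) * real_of_ereal (Linf_norm (ff j))) \<le> 2 * real j" using s by simp
qed


theorem mainTheorem1:
  shows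
  "(\<forall>(f::real \<Rightarrow> real) m (M::'a measure) X Y.
      prob_density_nonneg f \<longrightarrow> iid_with_density M X Y f \<longrightarrow> is_median f m \<longrightarrow>
        (SUP z\<in>{0..m}. PXY M X Y z) \<ge> lower_bound m f
      \<and> (SUP z\<in>{0<..}. PXY M X Y z) \<ge> lower_bound m f)
   \<and> (\<exists>(C::real) (fs::nat \<Rightarrow> real \<Rightarrow> real) (ms::nat \<Rightarrow> real). C > 0
      \<and> (\<forall>n. prob_density_nonneg (fs n) \<and> is_median (fs n) (ms n)
              \<and> Linf_norm (fs n) \<noteq> \<infinity>)
      \<and> filterlim (\<lambda>n. ms n * real_of_ereal (Linf_norm (fs n))) at_top sequentially
      \<and> (\<forall>n (M::'a measure) X Y. iid_with_density M X Y (fs n) \<longrightarrow>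
            (SUP z\<in>{0<..}. PXY M X Y z)
              \<le> C / log 2 (ms n * real_of_ereal (Linf_norm (fs n)))))"
  proof (intro conjI allI impI)
  fix f :: "real \<Rightarrow> real" and m and M :: "'a measure" and X Y
  assume pd: "prob_density_nonneg f" and iid: "iid_with_density M X Y f" and med: "is_median f m"
  interpret prob_space M using iid unfolding iid_with_density_def by blast
  have bdd: "bdd_above (PXY M X Y ` A)" for A
    by (rule bdd_aboveI[of _ 1]) (auto simp: PXY_def)
  obtain z where z: "0 < z" "z \<le> m" "lower_bound m f \<le> PXY M X Y z"
    using key1[OF pd iid med] by blast
  show "lower_bound m f \<le> (SUP z\<in>{0..m}. PXY M X Y z)"
    using z by (intro cSUP_upper2[OF bdd, of z]) auto
  show "lower_bound m f \<le> (SUP z\<in>{0<..}. PXY M X Y z)"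
    using z by (intro cSUP_upper2[OF bdd, of z]) auto
next
  define fs where "fs n = ff (n + 2)" for n
  define ms where "ms n = 1 - 1 / (2::real) ^ (n + 2)" for n
  have A: "\<forall>n. prob_density_nonneg (fs n) \<and> is_median (fs n) (ms n) \<and> Linf_norm (fs n) \<noteq> \<infinity>"
  proof
    fix n :: nat
    have j: "1 \<le> n + 2" "2 \<le> n + 2" by simp_all
    show "prob_density_nonneg (fs n) \<and> is_median (fs n) (ms n) \<and> Linf_norm (fs n) \<noteq> \<infinity>"
      unfolding fs_def ms_def using ff_pd[OF j(1)] ff_median[OF j(1)] ff_facts(4)[OF j(2)] by blast
  qed
  have B: "filterlim (\<lambda>n. ms n * real_of_ereal (Linf_norm (fs n))) at_top sequentially"
  proof (rule filterlim_at_top_mono[OF filterlim_real_sequentially])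
    show "\<forall>\<^sub>F x in sequentially. real x \<le> ms x * real_of_ereal (Linf_norm (fs x))"
    proof (intro always_eventually allI)
      fix n
      have "real n \<le> real (n+2)" by simp
      also have "\<dots> \<le> ms n * real_of_ereal (Linf_norm (fs n))"
        unfolding fs_def ms_def by (rule ff_facts(1)) simp
      finally show "real n \<le> ms n * real_of_ereal (Linf_norm (fs n))" .
    qed
  qed
  have C: "\<forall>n (M::'a measure) X Y. iid_with_density M X Y (fs n) \<longrightarrow>
            (SUP z\<in>{0<..}. PXY M X Y z) \<le> 1 / log 2 (ms n * real_of_ereal (Linf_norm (fs n)))"
  proof (intro allI impI)
    fix n :: nat and M :: "'a measure" and X Y
    assume iid: "iid_with_density M X Y (fs n)"
    have j: "2 \<le> n + 2" by simp
    have lp: "0 < log 2 (ms n * real_of_ereal (Linf_norm (fs n)))"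
      "log 2 (ms n * real_of_ereal (Linf_norm (fs n))) \<le> 2 * real (n + 2)"
      unfolding fs_def ms_def using ff_facts(2,3)[OF j] by auto
    have "(SUP z\<in>{0<..}. PXY M X Y z) \<le> 1 / (2 * real (n + 2))"
      using ff_PXY[of "n+2" M X Y] iid unfolding fs_def by (intro cSUP_least) auto
    also have "\<dots> \<le> 1 / log 2 (ms n * real_of_ereal (Linf_norm (fs n)))"
      using lp by (intro divide_left_mono) auto
    finally show "(SUP z\<in>{0<..}. PXY M X Y z) \<le> 1 / log 2 (ms n * real_of_ereal (Linf_norm (fs n)))" .
  qed
  show "\<exists>(C::real) (fs::nat \<Rightarrow> real \<Rightarrow> real) (ms::nat \<Rightarrow> real). C > 0
      \<and> (\<forall>n. prob_density_nonneg (fs n) \<and> is_median (fs n) (ms n)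
              \<and> Linf_norm (fs n) \<noteq> \<infinity>)
      \<and> filterlim (\<lambda>n. ms n * real_of_ereal (Linf_norm (fs n))) at_top sequentially
      \<and> (\<forall>n (M::'a measure) X Y. iid_with_density M X Y (fs n) \<longrightarrow>
            (SUP z\<in>{0<..}. PXY M X Y z)
              \<le> C / log 2 (ms n * real_of_ereal (Linf_norm (fs n))))"
    using A B C by (intro exI[of _ 1] exI[of _ fs] exI[of _ ms]) auto
qed

end
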